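(* For an $L$-layer ADMM-CSNet at initialization (all weight entries i.i.d. $\mathcal N(0,1)$), for any $l\in[L]$ and $i\in[m]$: $|z_i^l|\le\ln(m)+L_\sigma|u_i^{l-1}|+|\sigma(0)|$ with probability at least $1-2e^{-c^l_{\mathbf z}\ln^2(m)}$ for some constant $c^l_{\mathbf z}>0$, and $|u_i^l|\le\ln(m)+|u_i^{l-1}|+|z_i^l|$ with probability at least $1-2e^{-c^l_{\mathbf u}\ln^2(m)}$ for some constant $c^l_{\mathbf u}>0$.
   Context: Fix $\lambda>0$ and $\sigma(x)=\log(1+e^{x-\lambda})-\log(1+e^{-x-\lambda})$ (componentwise), $L_\sigma$-Lipschitz. ADMM-CSNet: input $\mathbf y\in\mathbb R^n$ with $|y_i|\le C_y$, initial $\mathbf z^0,\mathbf u^0\in\mathbb R^m$ with $|z^0_i|\le C_z$, $|u^0_i|\le C_u$; for $l\in[L]$, $\mathbf x^l=\frac1{\sqrt n}W_1^l\mathbf y+\frac1{\sqrt m}W_2^l(\mathbf z^{l-1}-\mathbf u^{l-1})$, $\mathbf z^l=\sigma(\mathbf x^l+\mathbf u^{l-1})$, $\mathbf u^l=\mathbf u^{l-1}+\mathbf x^l-\mathbf z^l$, with $W_1^l\in\mathbb R^{m\times n}$, $W_2^l\in\mathbb R^{m\times m}$. *)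

theory Defs
  imports "HOL-Probability.Probability"
begin

definition act :: "real \<Rightarrow> real \<Rightarrow> real" where
  "act lam x = ln (1 + exp (x - lam)) - ln (1 + exp (- x - lam))"

text \<open>Weight index: (l, k, j, r). k = 0: entry (j,r) of W_1^l (m x n);
  k = 1: entry (j,r) of W_2^l (m x m). Layers l = 1..L.\<close>
definition weight_idx :: "nat \<Rightarrow> nat \<Rightarrow> nat \<Rightarrow> (nat \<times> nat \<times> nat \<times> nat) set" where
  "weight_idx L n m =
     {(l, 0, j, r) | l j r. 1 \<le> l \<and> l \<le> L \<and> j < m \<and> r < n}
   \<union> {(l, 1, j, r) | l j r. 1 \<le> l \<and> l \<le> L \<and> j < m \<and> r < m}"

definition weight_space :: "nat \<Rightarrow> nat \<Rightarrow> nat \<Rightarrow> (nat \<times> nat \<times> nat \<times> nat \<Rightarrow> real) measure" where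
  "weight_space L n m = PiM (weight_idx L n m) (\<lambda>_. std_normal_distribution)"

fun admm :: "real \<Rightarrow> nat \<Rightarrow> nat \<Rightarrow> (nat \<Rightarrow> real) \<Rightarrow> (nat \<Rightarrow> real) \<Rightarrow> (nat \<Rightarrow> real)
    \<Rightarrow> (nat \<times> nat \<times> nat \<times> nat \<Rightarrow> real) \<Rightarrow> nat \<Rightarrow> (nat \<Rightarrow> real) \<times> (nat \<Rightarrow> real)" where
  "admm lam n m y z0 u0 W 0 = (z0, u0)"
| "admm lam n m y z0 u0 W (Suc l) =
    (let (z, u) = admm lam n m y z0 u0 W l;
         x = (\<lambda>i. (1 / sqrt (real n)) * (\<Sum>r<n. W (Suc l, 0, i, r) * y r)
                 + (1 / sqrt (real m)) * (\<Sum>r<m. W (Suc l, 1, i, r) * (z r - u r)));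
         z' = (\<lambda>i. act lam (x i + u i));
         u' = (\<lambda>i. u i + x i - z' i)
     in (z', u'))"

definition zl where "zl lam n m y z0 u0 W l = fst (admm lam n m y z0 u0 W l)"
definition ul where "ul lam n m y z0 u0 W l = snd (admm lam n m y z0 u0 W l)"

end

theory Submission
  imports Defs
begin


lemma exp_half_lt2: "exp (1/2::real) < 2"
proof -
  have "exp (1/2::real) * exp (1/2) = exp 1" by (simp add: exp_add[symmetric])
  then have "exp (1/2::real) * exp (1/2) \<le> 3" using exp_le by simp
  show ?thesis
  proof (rule ccontr)
    assume "\<not> exp (1/2::real) < 2"
    then have "2 * 2 \<le> exp (1/2::real) * exp (1/2)" by (intro mult_mono) auto
    with \<open>exp (1/2::real) * exp (1/2) \<le> 3\<close> show False by simp
  qed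
qed

lemma sqrt2_le_exp_half: "sqrt 2 \<le> exp (1/2::real)"
proof -
  have "2 \<le> exp (1::real)" using exp_ge_add_one_self[of 1] by simp
  then have "sqrt 2 \<le> sqrt (exp 1)" by simp
  also have "sqrt (exp 1) = exp (1/2::real)"
  proof (rule real_sqrt_unique)
    have "exp (1/2::real) * exp (1/2) = exp 1" by (simp add: exp_add[symmetric])
    then show "(exp (1/2::real))\<^sup>2 = exp 1" by (simp add: power2_eq_square)
  qed simp
  finally show ?thesis .
qed

lemma ln_sq_le: "m \<ge> 1 \<Longrightarrow> (ln (real m))\<^sup>2 \<le> 4 * real m"
proof -
  assume m: "m \<ge> 1"
  have "ln (sqrt (real m)) \<le> sqrt (real m) - 1" using m by (intro ln_le_minus_one) auto
  then have "ln (real m) \<le> 2 * sqrt (real m)" using m by (simp add: ln_sqrt)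
  moreover have "0 \<le> ln (real m)" using m by simp
  ultimately have "(ln (real m))\<^sup>2 \<le> (2 * sqrt (real m))\<^sup>2" by (rule power_mono)
  also have "\<dots> = 4 * real m" by (simp add: power_mult_distrib)
  finally show ?thesis .
qed

lemma final_arith:
  fixes m k :: nat and S c t B :: real
  assumes m: "m \<ge> 1" and S: "S \<ge> 1" and c: "c = min (1/(8*S)) (1/(32*(1+real k)))"
    and t: "t = ln (real m)"
    and B: "B \<le> real k * (sqrt 2 ^ m / exp (real m)) + sqrt 2 / exp (t\<^sup>2/(4*S))" and B1: "B \<le> 1"
  shows "B \<le> 2 * exp (- c * t\<^sup>2)"
proof (cases "2 * exp (- c * t\<^sup>2) \<ge> 1")
  case True then show ?thesis using B1 by linarith
next
  case False
  define e where "e = exp (- c * t\<^sup>2)"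
  have e: "e < 1/2" using False by (simp add: e_def)
  have c0: "c > 0" using S by (simp add: c)
  have t2: "t\<^sup>2 \<ge> 0" by simp
  have p2: "sqrt 2 / exp (t\<^sup>2/(4*S)) \<le> e"
  proof -
    have "2 * c \<le> 1/(4*S)" using S by (simp add: c min_def field_simps)
    then have "2 * c * t\<^sup>2 \<le> (1/(4*S)) * t\<^sup>2" using t2 by (rule mult_right_mono)
    then have "2 * c * t\<^sup>2 \<le> t\<^sup>2/(4*S)" by simp
    then have "exp (2 * c * t\<^sup>2) \<le> exp (t\<^sup>2/(4*S))" by simp
    then have "sqrt 2 / exp (t\<^sup>2/(4*S)) \<le> sqrt 2 / exp (2 * c * t\<^sup>2)"
      by (intro divide_left_mono) auto
    also have "\<dots> = sqrt 2 * e * e"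
    proof -
      have "2*c*t\<^sup>2 = c*t\<^sup>2 + c*t\<^sup>2" by simp
      then have ee: "exp (2*c*t\<^sup>2) = exp (c*t\<^sup>2) * exp (c*t\<^sup>2)" by (metis exp_add)
      have "e = 1 / exp (c*t\<^sup>2)" by (simp add: e_def exp_minus divide_inverse)
      then show ?thesis using ee by simp
    qed
    also have "\<dots> \<le> 2 * e * (1/2)"
    proof -
      have "sqrt 2 \<le> sqrt (4::real)" by (rule real_sqrt_le_mono) simp
      then have "sqrt 2 \<le> (2::real)" by simp
      then show ?thesis using e by (intro mult_mono) (auto simp: e_def)
    qed
    finally show ?thesis by simp
  qed
  have p1: "real k * (sqrt 2 ^ m / exp (real m)) \<le> e"
  proof -
    have "exp (c * t\<^sup>2) > 2" using e by (simp add: e_def exp_minus field_simps)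
    have "c * t\<^sup>2 > 1/2"
    proof (rule ccontr)
      assume "\<not> c * t\<^sup>2 > 1/2"
      then have "exp (c * t\<^sup>2) \<le> exp (1/2)" by simp
      with exp_half_lt2 \<open>exp (c * t\<^sup>2) > 2\<close> show False by simp
    qed
    moreover have "c \<le> 1/(32*(1+real k))" by (simp add: c)
    then have "c * t\<^sup>2 \<le> (1/(32*(1+real k))) * t\<^sup>2" using t2 by (rule mult_right_mono)
    moreover have "1 / (32 * (1 + real k)) * t\<^sup>2 = t\<^sup>2 / (32*(1+real k))" by simp
    ultimately have "1/2 < t\<^sup>2 / (32*(1+real k))" by linarith
    then have "1/2 * (32*(1+real k)) < t\<^sup>2"
      by (subst (asm) pos_less_divide_eq) auto
    then have "t\<^sup>2 > 16 * (1 + real k)" by simp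
    moreover have "t\<^sup>2 \<le> 4 * real m" using ln_sq_le[OF m] by (simp add: t)
    ultimately have mk: "real m > 4 * (1 + real k)" by simp
    have ct: "c * t\<^sup>2 \<le> real m / 8"
    proof -
      have "1/(32*(1+real k)) \<le> 1/32" by (intro divide_left_mono) auto
      moreover have "c \<le> 1/(32*(1+real k))" using c by simp
      ultimately have "c \<le> 1/32" by linarith
      then have "c * t\<^sup>2 \<le> (1/32) * t\<^sup>2" using t2 by (rule mult_right_mono)
      then have "c * t\<^sup>2 \<le> t\<^sup>2 / 32" by simp
      then show ?thesis using \<open>t\<^sup>2 \<le> 4 * real m\<close> by simp
    qed
    have q: "sqrt 2 ^ m / exp (real m) \<le> exp (- real m / 2)"
    proof -
      have "sqrt 2 ^ m \<le> exp (1/2) ^ m" using sqrt2_le_exp_half by (intro power_mono) auto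
      also have "\<dots> = exp (real m / 2)" by (simp add: exp_of_nat_mult[symmetric])
      finally have "sqrt 2 ^ m / exp (real m) \<le> exp (real m / 2) / exp (real m)"
        by (intro divide_right_mono) auto
      also have "\<dots> = exp (- real m / 2)" by (simp add: exp_diff[symmetric])
      finally show ?thesis .
    qed
    have kk: "real k \<le> exp (3 * real m / 8)"
    proof -
      have "1 + 3 * real m / 8 \<le> exp (3 * real m / 8)" by (rule exp_ge_add_one_self)
      moreover have "real k \<le> 1 + 3 * real m / 8" using mk by simp
      ultimately show ?thesis by (rule order_trans[rotated])
    qed
    have "real k * (sqrt 2 ^ m / exp (real m)) \<le> exp (3 * real m / 8) * exp (- real m / 2)"
      using kk q by (intro mult_mono) auto
    also have "\<dots> = exp (- real m / 8)" by (simp add: exp_add[symmetric])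
    also have "\<dots> \<le> e" using ct by (simp add: e_def)
    finally show ?thesis .
  qed
  show ?thesis using B p1 p2 by (simp add: e_def)
qed



abbreviation "NN \<equiv> std_normal_distribution"

lemma prob_NN: "prob_space NN"
  using real_dist_normal_dist real_distribution_def by blast

lemma sets_NN[simp, measurable_cong]: "sets NN = sets borel" by simp
lemma space_NN[simp]: "space NN = UNIV" by simp

lemma prob_PiNN: "prob_space (PiM J (\<lambda>_. NN))"
  by (intro prob_space_PiM prob_NN)

lemma distr_comp_NN:
  assumes "j \<in> J"
  shows "distr (PiM J (\<lambda>_. NN)) borel (\<lambda>y. y j) = NN"
proof -
  have "distr (PiM J (\<lambda>_. NN)) NN (\<lambda>y. y j) = NN"
    by (rule distr_PiM_component[OF prob_NN assms])
  moreover have "distr (PiM J (\<lambda>_. NN)) borel (\<lambda>y. y j) = distr (PiM J (\<lambda>_. NN)) NN (\<lambda>y. y j)"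
    by (rule distr_cong) auto
  ultimately show ?thesis by simp
qed

lemma comp_distributed:
  assumes "j \<in> J"
  shows "distributed (PiM J (\<lambda>_. NN)) lborel (\<lambda>y. y j) std_normal_density"
  unfolding distributed_def
proof (intro conjI)
  show "(\<lambda>y. y j) \<in> measurable (PiM J (\<lambda>_. NN)) lborel" using assms by simp
  show "(\<lambda>x. ennreal (std_normal_density x)) \<in> borel_measurable lborel" by simp
  have "distr (PiM J (\<lambda>_. NN)) lborel (\<lambda>y. y j) = distr (PiM J (\<lambda>_. NN)) borel (\<lambda>y. y j)"
    by (rule distr_cong) auto
  then show "distr (PiM J (\<lambda>_. NN)) lborel (\<lambda>y. y j) = density lborel std_normal_density"
    using distr_comp_NN[OF assms] by simp
qed

lemma comp_meas_all[measurable]: "(\<lambda>y. y i) \<in> borel_measurable (PiM J (\<lambda>_. NN))"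
proof (cases "i \<in> J")
  case True then show ?thesis by simp
next
  case False
  have "(\<lambda>y. undefined::real) \<in> borel_measurable (PiM J (\<lambda>_. NN))" by simp
  then show ?thesis
    by (rule measurable_cong[THEN iffD1, rotated]) (use False in \<open>auto simp: space_PiM PiE_def extensional_def\<close>)
qed

lemma comp_indep:
  assumes "J \<noteq> {}"
  shows "prob_space.indep_vars (PiM J (\<lambda>_. NN)) (\<lambda>_. borel) (\<lambda>j y. y j) J"
proof -
  interpret P: prob_space "PiM J (\<lambda>_. NN)" by (rule prob_PiNN)
  have "distr (PiM J (\<lambda>_. NN)) (PiM J (\<lambda>_. borel)) (\<lambda>x. \<lambda>i\<in>J. x i) = PiM J (\<lambda>_. NN)"
  proof -
    have "distr (PiM J (\<lambda>_. NN)) (PiM J (\<lambda>_. borel)) (\<lambda>x. \<lambda>i\<in>J. x i)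
        = distr (PiM J (\<lambda>_. NN)) (PiM J (\<lambda>_. borel)) (\<lambda>x. x)"
      by (rule distr_cong) (auto simp: space_PiM)
    also have "\<dots> = distr (PiM J (\<lambda>_. NN)) (PiM J (\<lambda>_. NN)) (\<lambda>x. x)"
      by (rule distr_cong) (auto intro!: sets_PiM_cong)
    also have "\<dots> = PiM J (\<lambda>_. NN)" by (rule distr_id)
    finally show ?thesis .
  qed
  moreover have "(\<Pi>\<^sub>M i\<in>J. distr (PiM J (\<lambda>_. NN)) borel (\<lambda>y. y i)) = PiM J (\<lambda>_. NN)"
    by (rule PiM_cong) (auto simp: distr_comp_NN)
  ultimately show ?thesis
    by (subst P.indep_vars_iff_distr_eq_PiM[OF assms]) (auto simp: comp_meas_all)
qed

lemma div_helper: "(p::real) / B = 1 / A \<Longrightarrow> e / A = p * e / B"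
proof -
  assume h: "p / B = 1 / A"
  have "e / A = e * (1 / A)" by simp
  also have "\<dots> = e * (p / B)" by (simp add: h)
  finally show ?thesis by simp
qed

lemma normal_pointwise:
  assumes "\<sigma> > 0" "\<sigma>\<^sup>2 \<le> S"
  shows "normal_density 0 \<sigma> x * exp (x\<^sup>2 / (4*S)) \<le> sqrt 2 * normal_density 0 (sqrt 2 * \<sigma>) x"
proof -
  have S: "S > 0" using assms by (smt (verit) zero_less_power)
  have e: "- x\<^sup>2 / (2 * \<sigma>\<^sup>2) + x\<^sup>2 / (4*S) \<le> - x\<^sup>2 / (4 * \<sigma>\<^sup>2)"
  proof -
    have "x\<^sup>2 / (4*S) \<le> x\<^sup>2 / (4 * \<sigma>\<^sup>2)"
      using assms S by (intro divide_left_mono) auto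
    moreover have "- x\<^sup>2 / (2 * \<sigma>\<^sup>2) + x\<^sup>2 / (4 * \<sigma>\<^sup>2) = - x\<^sup>2 / (4 * \<sigma>\<^sup>2)"
      using assms by (simp add: field_simps)
    ultimately show ?thesis by linarith
  qed
  have c: "sqrt 2 * (1 / sqrt (2 * pi * (sqrt 2 * \<sigma>)\<^sup>2)) = 1 / sqrt (2 * pi * \<sigma>\<^sup>2)"
    using assms by (simp add: power_mult_distrib real_sqrt_mult field_simps)
  have "normal_density 0 \<sigma> x * exp (x\<^sup>2 / (4*S)) = 1 / sqrt (2 * pi * \<sigma>\<^sup>2) * exp (- x\<^sup>2 / (2 * \<sigma>\<^sup>2) + x\<^sup>2 / (4*S))"
    by (simp add: normal_density_def) (simp add: exp_diff exp_minus field_simps)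
  also have "\<dots> \<le> 1 / sqrt (2 * pi * \<sigma>\<^sup>2) * exp (- x\<^sup>2 / (4 * \<sigma>\<^sup>2))"
    using e by (intro mult_left_mono) auto
  also have "\<dots> = sqrt 2 * normal_density 0 (sqrt 2 * \<sigma>) x"
    using c by (simp add: normal_density_def power_mult_distrib) (rule div_helper)
  finally show ?thesis .
qed

lemma gauss_sq:
  assumes J: "finite J" and S: "S > 0" and aS: "(\<Sum>j\<in>J. (a j)\<^sup>2) \<le> S"
  shows "(\<integral>\<^sup>+y. ennreal (exp ((\<Sum>j\<in>J. a j * y j)\<^sup>2 / (4*S))) \<partial>PiM J (\<lambda>_. NN)) \<le> ennreal (sqrt 2)"
proof -
  interpret P: prob_space "PiM J (\<lambda>_. NN)" by (rule prob_PiNN)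
  define J' where "J' = {j\<in>J. a j \<noteq> 0}"
  have J'J: "J' \<subseteq> J" and fJ': "finite J'" using J by (auto simp: J'_def)
  have sumeq: "(\<Sum>j\<in>J. a j * y j) = (\<Sum>j\<in>J'. a j * y j)" for y
    using J by (intro sum.mono_neutral_right) (auto simp: J'_def)
  have sq: "(\<Sum>j\<in>J'. (a j)\<^sup>2) = (\<Sum>j\<in>J. (a j)\<^sup>2)"
    using J by (intro sum.mono_neutral_left) (auto simp: J'_def)
  show ?thesis
  proof (cases "J' = {}")
    case True
    have "(\<integral>\<^sup>+y. ennreal (exp ((\<Sum>j\<in>J. a j * y j)\<^sup>2 / (4*S))) \<partial>PiM J (\<lambda>_. NN)) = (\<integral>\<^sup>+y. 1 \<partial>PiM J (\<lambda>_. NN))"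
      by (simp add: sumeq True)
    also have "\<dots> = 1" by (simp add: P.emeasure_space_1)
    finally show ?thesis by simp
  next
    case False
    have pos: "(\<Sum>j\<in>J'. (a j)\<^sup>2) > 0"
      using False fJ' by (intro sum_pos) (auto simp: J'_def)
    define \<sigma> where "\<sigma> = sqrt (\<Sum>j\<in>J'. (a j)\<^sup>2)"
    have \<sigma>pos: "\<sigma> > 0" using pos by (simp add: \<sigma>_def)
    have \<sigma>S: "\<sigma>\<^sup>2 \<le> S" using pos aS sq by (simp add: \<sigma>_def)
    have ind: "P.indep_vars (\<lambda>_. borel) (\<lambda>j y. a j * y j) J'"
    proof -
      have "P.indep_vars (\<lambda>_. borel) (\<lambda>j y. y j) J"
      proof (cases "J = {}")
        case True then show ?thesis using False J'J by auto
      next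
        case False then show ?thesis by (rule comp_indep)
      qed
      then have "P.indep_vars (\<lambda>_. borel) (\<lambda>j y. (\<lambda>t. a j * t) (y j)) J"
        by (rule P.indep_vars_compose2) auto
      then show ?thesis using J'J by (auto intro: P.indep_vars_subset)
    qed
    have dj: "distributed (PiM J (\<lambda>_. NN)) lborel (\<lambda>y. a j * y j) (normal_density 0 \<bar>a j\<bar>)" if "j \<in> J'" for j
    proof -
      have "a j \<noteq> 0" "j \<in> J" using that by (auto simp: J'_def)
      from P.normal_density_affine[OF comp_distributed[OF \<open>j\<in>J\<close>], where \<alpha>="a j" and \<beta>=0] this
      show ?thesis by simp
    qed
    have D: "distributed (PiM J (\<lambda>_. NN)) lborel (\<lambda>y. \<Sum>j\<in>J'. a j * y j) (normal_density 0 \<sigma>)"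
      using P.sum_indep_normal[OF fJ' False ind, of "\<lambda>j. \<bar>a j\<bar>" "\<lambda>_. 0"] dj
      by (simp add: \<sigma>_def J'_def)
    have "(\<integral>\<^sup>+y. ennreal (exp ((\<Sum>j\<in>J. a j * y j)\<^sup>2 / (4*S))) \<partial>PiM J (\<lambda>_. NN))
        = (\<integral>\<^sup>+y. ennreal (exp ((\<Sum>j\<in>J'. a j * y j)\<^sup>2 / (4*S))) \<partial>PiM J (\<lambda>_. NN))"
      by (simp add: sumeq)
    also have "\<dots> = (\<integral>\<^sup>+x. ennreal (normal_density 0 \<sigma> x) * ennreal (exp (x\<^sup>2 / (4*S))) \<partial>lborel)"
      by (rule distributed_nn_integral[OF D, symmetric]) simp
    also have "\<dots> \<le> (\<integral>\<^sup>+x. ennreal (sqrt 2) * ennreal (normal_density 0 (sqrt 2 * \<sigma>) x) \<partial>lborel)"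
      using normal_pointwise[OF \<sigma>pos \<sigma>S]
      by (intro nn_integral_mono) (simp add: ennreal_mult'[symmetric] ennreal_leI)
    also have "\<dots> = ennreal (sqrt 2) * (\<integral>\<^sup>+x. ennreal (normal_density 0 (sqrt 2 * \<sigma>) x) \<partial>lborel)"
      by (rule nn_integral_cmult) simp
    also have "(\<integral>\<^sup>+x. ennreal (normal_density 0 (sqrt 2 * \<sigma>) x) \<partial>lborel) = 1"
      using \<sigma>pos by (subst nn_integral_eq_integral) auto
    finally show ?thesis by simp
  qed
qed

interpretation NNP: product_sigma_finite "\<lambda>_::'i. NN"
  by (simp add: product_sigma_finite_def prob_NN prob_space_imp_sigma_finite)

lemma row_step:
  fixes I J :: "'i set" and F :: "('i \<Rightarrow> real) \<Rightarrow> ennreal"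
    and a :: "('i \<Rightarrow> real) \<Rightarrow> 'i \<Rightarrow> real" and G :: "('i \<Rightarrow> real) \<Rightarrow> real"
  assumes I: "finite I" and JI: "J \<subseteq> I" and S: "S > 0"
    and Fm: "F \<in> borel_measurable (PiM I (\<lambda>_. NN))"
    and Gm: "G \<in> borel_measurable (PiM I (\<lambda>_. NN))"
    and Fdep: "\<And>\<omega> \<omega>'. (\<forall>i. i \<notin> J \<longrightarrow> \<omega> i = \<omega>' i) \<Longrightarrow> F \<omega> = F \<omega>'"
    and adep: "\<And>\<omega> \<omega>'. (\<forall>i. i \<notin> J \<longrightarrow> \<omega> i = \<omega>' i) \<Longrightarrow> a \<omega> = a \<omega>'"
    and Glin: "\<And>\<omega>. \<omega> \<in> space (PiM I (\<lambda>_. NN)) \<Longrightarrow> G \<omega> = (\<Sum>j\<in>J. a \<omega> j * \<omega> j)"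
    and ab: "\<And>\<omega>. \<omega> \<in> space (PiM I (\<lambda>_. NN)) \<Longrightarrow> F \<omega> \<noteq> 0 \<Longrightarrow> (\<Sum>j\<in>J. (a \<omega> j)\<^sup>2) \<le> S"
  shows "(\<integral>\<^sup>+\<omega>. F \<omega> * ennreal (exp ((G \<omega>)\<^sup>2/(4*S))) \<partial>PiM I (\<lambda>_. NN))
           \<le> ennreal (sqrt 2) * (\<integral>\<^sup>+\<omega>. F \<omega> \<partial>PiM I (\<lambda>_. NN))"
proof -
  define K where "K = I - J"
  have IKJ: "I = K \<union> J" and disj: "K \<inter> J = {}" using JI by (auto simp: K_def)
  have fK: "finite K" and fJ: "finite J" using I JI by (auto simp: K_def intro: finite_subset)
  define y0 :: "'i \<Rightarrow> real" where "y0 = (\<lambda>j\<in>J. 0)"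
  have y0s: "y0 \<in> space (PiM J (\<lambda>_. NN))" by (simp add: y0_def space_PiM)
  define om where "om x = merge K J (x, y0)" for x
  have oms: "om x \<in> space (PiM I (\<lambda>_. NN))" if "x \<in> space (PiM K (\<lambda>_. NN))" for x
    using that y0s by (auto simp: om_def IKJ space_PiM PiE_iff)
  have omm: "om \<in> measurable (PiM K (\<lambda>_. NN)) (PiM I (\<lambda>_. NN))"
    unfolding om_def IKJ using y0s by measurable
  have agree: "\<forall>i. i \<notin> J \<longrightarrow> merge K J (x, y) i = om x i" for x y
    by (auto simp: om_def merge_def K_def)
  have Fm': "F \<in> borel_measurable (PiM (K \<union> J) (\<lambda>_. NN))" using Fm IKJ by simp
  have Fm'': "(\<lambda>\<omega>. F \<omega> * ennreal (exp ((G \<omega>)\<^sup>2/(4*S)))) \<in> borel_measurable (PiM (K \<union> J) (\<lambda>_. NN))"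
    using Fm Gm IKJ by simp
  have Fom: "(\<lambda>x. F (om x)) \<in> borel_measurable (PiM K (\<lambda>_. NN))"
    using measurable_comp[OF omm Fm] by (simp add: comp_def)
  have "(\<integral>\<^sup>+\<omega>. F \<omega> * ennreal (exp ((G \<omega>)\<^sup>2/(4*S))) \<partial>PiM I (\<lambda>_. NN))
     = (\<integral>\<^sup>+x. (\<integral>\<^sup>+y. F (merge K J (x,y)) * ennreal (exp ((G (merge K J (x,y)))\<^sup>2/(4*S))) \<partial>PiM J (\<lambda>_. NN)) \<partial>PiM K (\<lambda>_. NN))"
    unfolding IKJ by (rule NNP.product_nn_integral_fold[OF disj fK fJ Fm''])
  also have "\<dots> = (\<integral>\<^sup>+x. F (om x) * (\<integral>\<^sup>+y. ennreal (exp ((\<Sum>j\<in>J. a (om x) j * y j)\<^sup>2/(4*S))) \<partial>PiM J (\<lambda>_. NN)) \<partial>PiM K (\<lambda>_. NN))"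
  proof (rule nn_integral_cong)
    fix x assume x: "x \<in> space (PiM K (\<lambda>_. NN))"
    have "(\<integral>\<^sup>+y. F (merge K J (x,y)) * ennreal (exp ((G (merge K J (x,y)))\<^sup>2/(4*S))) \<partial>PiM J (\<lambda>_. NN))
       = (\<integral>\<^sup>+y. F (om x) * ennreal (exp ((\<Sum>j\<in>J. a (om x) j * y j)\<^sup>2/(4*S))) \<partial>PiM J (\<lambda>_. NN))"
    proof (rule nn_integral_cong)
      fix y assume y: "y \<in> space (PiM J (\<lambda>_. NN))"
      have ms: "merge K J (x,y) \<in> space (PiM I (\<lambda>_. NN))"
        using x y by (auto simp: IKJ space_PiM PiE_iff)
      have "F (merge K J (x,y)) = F (om x)" by (rule Fdep[OF agree])
      moreover have "a (merge K J (x,y)) = a (om x)" by (rule adep[OF agree])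
      moreover have "merge K J (x,y) j = y j" if "j \<in> J" for j using that disj by (auto simp: merge_def)
      ultimately show "F (merge K J (x,y)) * ennreal (exp ((G (merge K J (x,y)))\<^sup>2/(4*S)))
          = F (om x) * ennreal (exp ((\<Sum>j\<in>J. a (om x) j * y j)\<^sup>2/(4*S)))"
        using Glin[OF ms] by simp
    qed
    also have "\<dots> = F (om x) * (\<integral>\<^sup>+y. ennreal (exp ((\<Sum>j\<in>J. a (om x) j * y j)\<^sup>2/(4*S))) \<partial>PiM J (\<lambda>_. NN))"
      by (rule nn_integral_cmult) simp
    finally show "(\<integral>\<^sup>+y. F (merge K J (x,y)) * ennreal (exp ((G (merge K J (x,y)))\<^sup>2/(4*S))) \<partial>PiM J (\<lambda>_. NN))
       = F (om x) * (\<integral>\<^sup>+y. ennreal (exp ((\<Sum>j\<in>J. a (om x) j * y j)\<^sup>2/(4*S))) \<partial>PiM J (\<lambda>_. NN))" .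
  qed
  also have "\<dots> \<le> (\<integral>\<^sup>+x. F (om x) * ennreal (sqrt 2) \<partial>PiM K (\<lambda>_. NN))"
  proof (rule nn_integral_mono)
    fix x assume x: "x \<in> space (PiM K (\<lambda>_. NN))"
    show "F (om x) * (\<integral>\<^sup>+y. ennreal (exp ((\<Sum>j\<in>J. a (om x) j * y j)\<^sup>2/(4*S))) \<partial>PiM J (\<lambda>_. NN))
        \<le> F (om x) * ennreal (sqrt 2)"
    proof (cases "F (om x) = 0")
      case True then show ?thesis by simp
    next
      case False
      then show ?thesis using gauss_sq[OF fJ S ab[OF oms[OF x] False]]
        by (intro mult_left_mono) auto
    qed
  qed
  also have "\<dots> = ennreal (sqrt 2) * (\<integral>\<^sup>+x. F (om x) \<partial>PiM K (\<lambda>_. NN))"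
    using nn_integral_cmult[OF Fom, of "ennreal (sqrt 2)"] by (simp add: mult.commute)
  also have "(\<integral>\<^sup>+x. F (om x) \<partial>PiM K (\<lambda>_. NN)) = (\<integral>\<^sup>+\<omega>. F \<omega> \<partial>PiM I (\<lambda>_. NN))"
  proof -
    have "(\<integral>\<^sup>+\<omega>. F \<omega> \<partial>PiM I (\<lambda>_. NN)) = (\<integral>\<^sup>+x. (\<integral>\<^sup>+y. F (merge K J (x,y)) \<partial>PiM J (\<lambda>_. NN)) \<partial>PiM K (\<lambda>_. NN))"
      unfolding IKJ by (rule NNP.product_nn_integral_fold[OF disj fK fJ Fm'])
    also have "\<dots> = (\<integral>\<^sup>+x. (\<integral>\<^sup>+y. F (om x) \<partial>PiM J (\<lambda>_. NN)) \<partial>PiM K (\<lambda>_. NN))"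
      by (intro nn_integral_cong) (simp add: Fdep[OF agree])
    also have "\<dots> = (\<integral>\<^sup>+x. F (om x) \<partial>PiM K (\<lambda>_. NN))"
      by (intro nn_integral_cong) (simp add: prob_space.emeasure_space_1[OF prob_PiNN])
    finally show ?thesis by simp
  qed
  finally show ?thesis .
qed



lemma act_zero: "act lam 0 = 0" by (simp add: act_def)

lemma act_odd: "act lam (- t) = - act lam t" by (simp add: act_def)

lemma act_bound_pos:
  assumes "lam > 0" "t \<ge> 0"
  shows "0 \<le> act lam t \<and> act lam t \<le> t"
proof
  have "exp (- t - lam) \<le> exp (t - lam)" using assms by simp
  then have "ln (1 + exp (- t - lam)) \<le> ln (1 + exp (t - lam))"
    by (subst ln_le_cancel_iff) (auto intro: add_pos_pos)
  then show "0 \<le> act lam t" by (simp add: act_def)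
  have "1 + exp (t - lam) \<le> exp t * (1 + exp (- t - lam))"
  proof -
    have "exp (-lam) \<le> 1" using assms by simp
    moreover have "1 \<le> exp t" using assms by simp
    ultimately have "(exp t - 1) * (1 - exp (-lam)) \<ge> 0" by simp
    moreover have "exp t * (1 + exp (- t - lam)) = exp t + exp (-lam)"
      by (simp add: distrib_left exp_add[symmetric])
    moreover have "exp (t - lam) = exp t * exp (-lam)" by (simp add: exp_add[symmetric])
    ultimately show ?thesis by (simp add: algebra_simps)
  qed
  then have "ln (1 + exp (t - lam)) \<le> ln (exp t * (1 + exp (- t - lam)))"
    by (simp add: add_pos_pos)
  also have "\<dots> = t + ln (1 + exp (- t - lam))"
  proof -
    have p: "0 < 1 + exp (- t - lam)" by (simp add: add_pos_pos)
    then show ?thesis by (simp add: ln_mult)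
  qed
  finally show "act lam t \<le> t" by (simp add: act_def)
qed

lemma act_abs: "lam > 0 \<Longrightarrow> \<bar>act lam t\<bar> \<le> \<bar>t\<bar>"
proof (cases "t \<ge> 0")
  case True assume "lam > 0" then show ?thesis using act_bound_pos[of lam t] True by auto
next
  case False assume "lam > 0"
  then have "0 \<le> act lam (-t) \<and> act lam (-t) \<le> -t" using act_bound_pos[of lam "-t"] False by auto
  then show ?thesis using False by (simp add: act_odd)
qed

lemma Lsig_ge1:
  assumes "lam > 0" "L-lipschitz_on UNIV (act lam)"
  shows "L \<ge> 1"
proof (rule ccontr)
  assume "\<not> L \<ge> 1"
  then have L1: "L < 1" by simp
  have L0: "L \<ge> 0" using assms(2) by (simp add: lipschitz_on_def)
  define t where "t = (lam + ln 2 + 1) / (1 - L)"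
  have l2: "0 < ln (2::real)" by (rule ln_gt_zero) simp
  have "lam + ln 2 + 1 > 0" using assms(1) l2 by linarith
  then have tpos: "t > 0" using L1 by (simp add: t_def)
  have "dist (act lam t) (act lam 0) \<le> L * dist t 0"
    using assms(2) unfolding lipschitz_on_def by blast
  then have up: "act lam t \<le> L * t" using tpos act_bound_pos[OF assms(1), of t] by (simp add: act_zero dist_real_def)
  have "ln (1 + exp (t - lam)) \<ge> t - lam"
  proof -
    have "ln (exp (t - lam)) \<le> ln (1 + exp (t - lam))" by (subst ln_le_cancel_iff) (auto intro: add_pos_pos)
    then show ?thesis by simp
  qed
  moreover have "ln (1 + exp (- t - lam)) \<le> ln 2"
  proof -
    have "exp (- t - lam) \<le> 1" using tpos assms(1) by simp
    then show ?thesis by (subst ln_le_cancel_iff) (auto simp: add_pos_pos)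
  qed
  ultimately have "act lam t \<ge> t - lam - ln 2" by (simp add: act_def)
  with up have "t * (1 - L) \<le> lam + ln 2" by (simp add: algebra_simps)
  moreover have "t * (1 - L) = lam + ln 2 + 1" using L1 by (simp add: t_def)
  ultimately show False by simp
qed

locale net =
  fixes lam :: real and n m :: nat and y z0 u0 :: "nat \<Rightarrow> real" and L :: nat
  assumes lam: "lam > 0"
begin

definition Z where "Z k W = fst (admm lam n m y z0 u0 W k)"
definition U where "U k W = snd (admm lam n m y z0 u0 W k)"
definition X where "X k W i = (1 / sqrt (real n)) * (\<Sum>r<n. W (k, 0, i, r) * y r)
                 + (1 / sqrt (real m)) * (\<Sum>r<m. W (k, 1, i, r) * (Z (k-1) W r - U (k-1) W r))"

lemma Z0: "Z 0 W = z0" and U0: "U 0 W = u0" by (simp_all add: Z_def U_def)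

lemma ZU_Suc: "Z (Suc k) W = (\<lambda>i. act lam (X (Suc k) W i + U k W i))"
  "U (Suc k) W = (\<lambda>i. U k W i + X (Suc k) W i - Z (Suc k) W i)"
  by (simp_all add: Z_def U_def X_def Let_def split: prod.split)

lemma admm_dep:
  "(\<And>l b i r. l \<le> k \<Longrightarrow> W (l, b, i, r) = W' (l, b, i, r)) \<Longrightarrow> admm lam n m y z0 u0 W k = admm lam n m y z0 u0 W' k"
proof (induction k)
  case 0 then show ?case by simp
next
  case (Suc k)
  have "admm lam n m y z0 u0 W k = admm lam n m y z0 u0 W' k" using Suc by auto
  then show ?case using Suc.prems by (simp add: Let_def split: prod.split)
qed

lemma ZU_dep:
  assumes "\<And>l b i r. l \<le> k \<Longrightarrow> W (l, b, i, r) = W' (l, b, i, r)"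
  shows "Z k W = Z k W'" "U k W = U k W'"
  using admm_dep[of k W W'] assms by (simp_all add: Z_def U_def)

lemma X_dep:
  assumes "\<And>l b i r. l < k \<Longrightarrow> W (l, b, i, r) = W' (l, b, i, r)"
    and "\<And>b r. W (k, b, i, r) = W' (k, b, i, r)"
  shows "X k W i = X k W' i"
proof -
  have "Z (k-1) W = Z (k-1) W' \<and> U (k-1) W = U (k-1) W'"
  proof (cases k)
    case 0 then show ?thesis by (simp add: Z0 U0)
  next
    case (Suc k')
    then have "W (l, b, i, r) = W' (l, b, i, r)" if "l \<le> k'" for l b i r
      using assms(1) that by simp
    then show ?thesis using ZU_dep[of k' W W'] Suc by auto
  qed
  then show ?thesis using assms(2) by (simp add: X_def)
qed

abbreviation "Mw \<equiv> weight_space L n m"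

lemma meas_W[measurable]: "(\<lambda>W. W j) \<in> borel_measurable Mw"
  unfolding weight_space_def by (rule comp_meas_all)

lemma meas_X_gen:
  assumes [measurable]: "\<And>r. (\<lambda>W. Z (k-1) W r) \<in> borel_measurable Mw" "\<And>r. (\<lambda>W. U (k-1) W r) \<in> borel_measurable Mw"
  shows "(\<lambda>W. X k W i) \<in> borel_measurable Mw"
  unfolding X_def by measurable

lemma meas_act[measurable]: "act lam \<in> borel_measurable borel" unfolding act_def by measurable

lemma meas_ZU: "(\<lambda>W. Z k W r) \<in> borel_measurable Mw \<and> (\<lambda>W. U k W r) \<in> borel_measurable Mw"
proof (induction k arbitrary: r)
  case 0 then show ?case by (simp add: Z0 U0)
next
  case (Suc k)
  have a1[measurable]: "(\<lambda>W. Z (Suc k - 1) W r) \<in> borel_measurable Mw" for r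
    using Suc.IH[of r] by simp
  have a2[measurable]: "(\<lambda>W. U (Suc k - 1) W r) \<in> borel_measurable Mw" for r
    using Suc.IH[of r] by simp
  have a3[measurable]: "(\<lambda>W. U k W r) \<in> borel_measurable Mw" for r
    using Suc.IH[of r] by simp
  have [measurable]: "(\<lambda>W. X (Suc k) W r) \<in> borel_measurable Mw" for r
    by (rule meas_X_gen) (use Suc.IH in auto)
  have m1: "(\<lambda>W. Z (Suc k) W r) \<in> borel_measurable Mw"
    unfolding ZU_Suc by measurable
  have "(\<lambda>W. U (Suc k) W r) \<in> borel_measurable Mw"
    unfolding ZU_Suc(2) using m1 by measurable
  with m1 show ?case by simp
qed

lemma meas_Z[measurable]: "(\<lambda>W. Z k W r) \<in> borel_measurable Mw"
  and meas_U[measurable]: "(\<lambda>W. U k W r) \<in> borel_measurable Mw"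
  using meas_ZU by auto

lemma meas_X[measurable]: "(\<lambda>W. X k W r) \<in> borel_measurable Mw"
  by (rule meas_X_gen) simp_all

definition rowset where
  "rowset k i = (\<lambda>r. (k, 0::nat, i, r)) ` {..<n} \<union> (\<lambda>r. (k, 1, i, r)) ` {..<m}"
definition coef where
  "coef k W j = (case j of (_, b, _, r) \<Rightarrow> if b = 0 then y r / sqrt (real n)
      else (Z (k-1) W r - U (k-1) W r) / sqrt (real m))"
definition s2 where
  "s2 k W = (\<Sum>r<n. (y r)\<^sup>2 / real n) + (\<Sum>r<m. (Z (k-1) W r - U (k-1) W r)\<^sup>2 / real m)"

lemma rowset_split:
  "(\<Sum>j\<in>rowset k i. g j) = (\<Sum>r<n. g (k, 0, i, r)) + (\<Sum>r<m. g (k, 1, i, r))"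
proof -
  have d: "(\<lambda>r. (k, 0::nat, i, r)) ` {..<n} \<inter> (\<lambda>r. (k, 1, i, r)) ` {..<m} = {}" by auto
  have i1: "inj_on (\<lambda>r. (k, 0::nat, i, r)) {..<n}" by (auto simp: inj_on_def)
  have i2: "inj_on (\<lambda>r. (k, 1::nat, i, r)) {..<m}" by (auto simp: inj_on_def)
  show ?thesis unfolding rowset_def
    sum.union_disjoint[OF finite_imageI[OF finite_lessThan] finite_imageI[OF finite_lessThan] d]
    sum.reindex[OF i1] sum.reindex[OF i2] comp_def ..
qed

lemma X_lin: "X k W i = (\<Sum>j\<in>rowset k i. coef k W j * W j)"
  unfolding rowset_split X_def coef_def
  by (simp add: sum_distrib_left algebra_simps diff_divide_distrib)

lemma coef_sq: "(\<Sum>j\<in>rowset k i. (coef k W j)\<^sup>2) = s2 k W"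
  unfolding rowset_split s2_def coef_def
  by (simp add: power_divide)

lemma coef_dep:
  assumes "\<And>j. j \<notin> rowset k i \<Longrightarrow> W j = W' j"
  shows "coef k W = coef k W'"
proof -
  have "Z (k-1) W = Z (k-1) W' \<and> U (k-1) W = U (k-1) W'"
  proof (cases k)
    case 0 then show ?thesis by (simp add: Z0 U0)
  next
    case (Suc k')
    have "W (l, b, i', r) = W' (l, b, i', r)" if "l \<le> k'" for l b i' r
    proof -
      have "(l, b, i', r) \<notin> rowset k i" using that Suc by (auto simp: rowset_def)
      then show ?thesis by (rule assms)
    qed
    then show ?thesis using ZU_dep[of k' W W'] Suc by auto
  qed
  then show ?thesis by (simp add: coef_def fun_eq_iff)
qed

lemma X_dep_row:
  assumes "\<And>j. j \<notin> rowset k q \<Longrightarrow> W j = W' j" "r \<noteq> q"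
  shows "X k W r = X k W' r"
proof (rule X_dep)
  fix l b i r' assume "l < k"
  then have "(l, b, i, r') \<notin> rowset k q" by (auto simp: rowset_def)
  then show "W (l, b, i, r') = W' (l, b, i, r')" by (rule assms)
next
  fix b r'
  have "(k, b, r, r') \<notin> rowset k q" using assms(2) by (auto simp: rowset_def)
  then show "W (k, b, r, r') = W' (k, b, r, r')" by (rule assms)
qed

lemma sq_bound:
  fixes p a x c :: real
  assumes "\<bar>p\<bar> \<le> c * (\<bar>a\<bar> + \<bar>x\<bar>)" "c \<ge> 0"
  shows "p\<^sup>2 \<le> 2 * c\<^sup>2 * (a\<^sup>2 + x\<^sup>2)"
proof -
  have "\<bar>p\<bar> \<le> \<bar>c * (\<bar>a\<bar> + \<bar>x\<bar>)\<bar>" using assms by simp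
  then have "p\<^sup>2 \<le> (c * (\<bar>a\<bar> + \<bar>x\<bar>))\<^sup>2" by (simp add: abs_le_square_iff)
  also have "\<dots> = c\<^sup>2 * (\<bar>a\<bar> + \<bar>x\<bar>)\<^sup>2" by (simp add: power_mult_distrib)
  also have "\<dots> \<le> c\<^sup>2 * (2 * (a\<^sup>2 + x\<^sup>2))"
  proof (rule mult_left_mono)
    have "0 \<le> (\<bar>a\<bar> - \<bar>x\<bar>)\<^sup>2" by simp
    then show "(\<bar>a\<bar> + \<bar>x\<bar>)\<^sup>2 \<le> 2 * (a\<^sup>2 + x\<^sup>2)"
      by (simp add: power2_eq_square algebra_simps)
  qed simp
  finally show ?thesis by (simp add: algebra_simps)
qed

lemma step_bounds:
  "(U (Suc k) W i)\<^sup>2 \<le> 8 * ((U k W i)\<^sup>2 + (X (Suc k) W i)\<^sup>2)"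
  "(Z (Suc k) W i - U (Suc k) W i)\<^sup>2 \<le> 18 * ((U k W i)\<^sup>2 + (X (Suc k) W i)\<^sup>2)"
proof -
  define a where "a = U k W i"
  define x where "x = X (Suc k) W i"
  have z: "Z (Suc k) W i = act lam (x + a)" by (simp add: ZU_Suc a_def x_def)
  have u: "U (Suc k) W i = a + x - act lam (x + a)" by (simp add: ZU_Suc a_def x_def)
  have za: "\<bar>act lam (x + a)\<bar> \<le> \<bar>a\<bar> + \<bar>x\<bar>" using act_abs[OF lam, of "x + a"] by linarith
  have "\<bar>a + x - act lam (x + a)\<bar> \<le> 2 * (\<bar>a\<bar> + \<bar>x\<bar>)" using za by (smt (verit))
  from sq_bound[OF this] show "(U (Suc k) W i)\<^sup>2 \<le> 8 * ((U k W i)\<^sup>2 + (X (Suc k) W i)\<^sup>2)"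
    by (simp add: u a_def x_def)
  have "\<bar>act lam (x + a) - (a + x - act lam (x + a))\<bar> \<le> 3 * (\<bar>a\<bar> + \<bar>x\<bar>)" using za by (smt (verit))
  from sq_bound[OF this] show "(Z (Suc k) W i - U (Suc k) W i)\<^sup>2 \<le> 18 * ((U k W i)\<^sup>2 + (X (Suc k) W i)\<^sup>2)"
    by (simp add: u z a_def x_def)
qed

definition Q where "Q k W = (\<Sum>r<m. (U k W r)\<^sup>2 / real m)"
definition Xs where "Xs k W = (\<Sum>r<m. (X k W r)\<^sup>2 / real m)"

lemma Q_step: "Q (Suc k) W \<le> 8 * (Q k W + Xs (Suc k) W)"
proof -
  have "Q (Suc k) W \<le> (\<Sum>r<m. 8 * ((U k W r)\<^sup>2 + (X (Suc k) W r)\<^sup>2) / real m)"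
    unfolding Q_def by (intro sum_mono divide_right_mono step_bounds) auto
  also have "\<dots> = 8 * (Q k W + Xs (Suc k) W)"
    by (simp add: Q_def Xs_def sum_distrib_left sum.distrib add_divide_distrib)
  finally show ?thesis .
qed

lemma V_step: "(\<Sum>r<m. (Z (Suc k) W r - U (Suc k) W r)\<^sup>2 / real m) \<le> 18 * (Q k W + Xs (Suc k) W)"
proof -
  have "(\<Sum>r<m. (Z (Suc k) W r - U (Suc k) W r)\<^sup>2 / real m) \<le> (\<Sum>r<m. 18 * ((U k W r)\<^sup>2 + (X (Suc k) W r)\<^sup>2) / real m)"
    by (intro sum_mono divide_right_mono step_bounds) auto
  also have "\<dots> = 18 * (Q k W + Xs (Suc k) W)"
    by (simp add: Q_def Xs_def sum_distrib_left sum.distrib add_divide_distrib)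
  finally show ?thesis .
qed

lemma meas_Q[measurable]: "Q k \<in> borel_measurable Mw"
  unfolding Q_def by measurable
lemma meas_Xs[measurable]: "Xs k \<in> borel_measurable Mw"
  unfolding Xs_def by measurable
lemma meas_s2[measurable]: "s2 k \<in> borel_measurable Mw"
  unfolding s2_def by measurable

end

lemma avg_le:
  fixes f :: "nat \<Rightarrow> real"
  assumes "\<And>r. r < N \<Longrightarrow> f r \<le> B" "0 \<le> B"
  shows "(\<Sum>r<N. f r / real N) \<le> B"
proof (cases "N = 0")
  case True then show ?thesis using assms by simp
next
  case False
  have "(\<Sum>r<N. f r / real N) \<le> (\<Sum>r<N. B / real N)"
    using assms by (intro sum_mono divide_right_mono) auto
  also have "\<dots> = B" using False by simp
  finally show ?thesis .
qed

primrec cstg :: "real \<Rightarrow> real \<Rightarrow> real \<Rightarrow> nat \<Rightarrow> real \<times> real" where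
  "cstg Cy Cz Cu 0 = (1 + Cy\<^sup>2 + (Cz + Cu)\<^sup>2, Cu\<^sup>2)"
| "cstg Cy Cz Cu (Suc k) = (1 + Cy\<^sup>2 + 18 * (snd (cstg Cy Cz Cu k) + 4 * fst (cstg Cy Cz Cu k)),
     8 * (snd (cstg Cy Cz Cu k) + 4 * fst (cstg Cy Cz Cu k)))"

locale net2 = net +
  fixes Cy Cz Cu :: real
  assumes m0: "m > 0"
    and yb: "\<And>k. k < n \<Longrightarrow> \<bar>y k\<bar> \<le> Cy"
    and zb: "\<And>k. k < m \<Longrightarrow> \<bar>z0 k\<bar> \<le> Cz"
    and ub: "\<And>k. k < m \<Longrightarrow> \<bar>u0 k\<bar> \<le> Cu"
begin

lemma Cz0: "Cz \<ge> 0" and Cu0: "Cu \<ge> 0"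
  using zb[OF m0] ub[OF m0] by auto

abbreviation cst where "cst \<equiv> cstg Cy Cz Cu"

lemma cst_pos: "fst (cst k) \<ge> 1 \<and> snd (cst k) \<ge> 0"
  by (induction k) auto

definition good where "good k W \<longleftrightarrow> s2 (Suc k) W \<le> fst (cst k) \<and> Q k W \<le> snd (cst k)"

lemma meas_good[measurable]: "Measurable.pred Mw (good k)"
  unfolding good_def by measurable

lemma ysum: "(\<Sum>r<n. (y r)\<^sup>2 / real n) \<le> Cy\<^sup>2"
proof (rule avg_le)
  fix r assume "r < n"
  then have "\<bar>y r\<bar> \<le> \<bar>Cy\<bar>" using yb by force
  then show "(y r)\<^sup>2 \<le> Cy\<^sup>2" by (simp add: abs_le_square_iff)
qed simp

lemma good0: "good 0 W"
proof -
  have "(\<Sum>r<m. (z0 r - u0 r)\<^sup>2 / real m) \<le> (Cz + Cu)\<^sup>2"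
  proof (rule avg_le)
    fix r assume "r < m"
    then have "\<bar>z0 r - u0 r\<bar> \<le> \<bar>Cz + Cu\<bar>" using zb ub Cz0 Cu0 by force
    then show "(z0 r - u0 r)\<^sup>2 \<le> (Cz + Cu)\<^sup>2" by (simp add: abs_le_square_iff)
  qed simp
  moreover have "Q 0 W \<le> Cu\<^sup>2"
    unfolding Q_def U0
  proof (rule avg_le)
    fix r assume "r < m"
    then have "\<bar>u0 r\<bar> \<le> \<bar>Cu\<bar>" using ub by force
    then show "(u0 r)\<^sup>2 \<le> Cu\<^sup>2" by (simp add: abs_le_square_iff)
  qed simp
  ultimately show ?thesis using ysum by (simp add: good_def s2_def Z0 U0)
qed

lemma good_step:
  assumes "good k W" "Xs (Suc k) W \<le> 4 * fst (cst k)"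
  shows "good (Suc k) W"
proof -
  have "Q (Suc k) W \<le> 8 * (snd (cst k) + 4 * fst (cst k))"
    using Q_step[of k W] assms by (simp add: good_def)
  moreover have "s2 (Suc (Suc k)) W \<le> 1 + Cy\<^sup>2 + 18 * (snd (cst k) + 4 * fst (cst k))"
    using V_step[of k W] assms ysum by (simp add: good_def s2_def)
  ultimately show ?thesis by (simp add: good_def)
qed

lemma fin_I: "finite (weight_idx L n m)"
proof -
  have "weight_idx L n m \<subseteq> {..L} \<times> {..(1::nat)} \<times> {..<m} \<times> {..<n+m}"
    by (auto simp: weight_idx_def)
  then show ?thesis by (rule finite_subset) auto
qed

lemma rowset_sub: "1 \<le> k \<Longrightarrow> k \<le> L \<Longrightarrow> i < m \<Longrightarrow> rowset k i \<subseteq> weight_idx L n m"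
  by (auto simp: rowset_def weight_idx_def)

lemma Mw_eq: "Mw = PiM (weight_idx L n m) (\<lambda>_. NN)" by (simp add: weight_space_def)

lemma prob_Mw: "prob_space Mw" unfolding Mw_eq by (rule prob_PiNN)

lemma good_dep:
  assumes "\<And>j. j \<notin> rowset (Suc k) q \<Longrightarrow> W j = W' j"
  shows "good k W = good k W'"
proof -
  have "W (l, b, i', r) = W' (l, b, i', r)" if "l \<le> k" for l b i' r
  proof -
    have "(l, b, i', r) \<notin> rowset (Suc k) q" using that by (auto simp: rowset_def)
    then show ?thesis by (rule assms)
  qed
  then have "Z k W = Z k W'" "U k W = U k W'" using ZU_dep[of k W W'] by auto
  then show ?thesis by (simp add: good_def s2_def Q_def)
qed

lemma markov_nn:
  fixes f :: "_ \<Rightarrow> ennreal"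
  assumes "A \<in> sets M" "\<And>x. x \<in> A \<Longrightarrow> c \<le> f x"
  shows "emeasure M A * c \<le> (\<integral>\<^sup>+x. f x \<partial>M)"
proof -
  have "emeasure M A * c = (\<integral>\<^sup>+x. c * indicator A x \<partial>M)"
    using assms(1) by (simp add: nn_integral_cmult_indicator mult.commute)
  also have "\<dots> \<le> (\<integral>\<^sup>+x. f x \<partial>M)"
    using assms(2) by (intro nn_integral_mono) (auto split: split_indicator)
  finally show ?thesis .
qed

lemma chi_bound:
  assumes kL: "Suc k \<le> L" and q: "q \<le> m"
  shows "(\<integral>\<^sup>+W. ennreal (if good k W then 1 else 0) * ennreal (\<Prod>r<q. exp ((X (Suc k) W r)\<^sup>2 / (4 * fst (cst k)))) \<partial>Mw)
     \<le> ennreal (sqrt 2) ^ q * emeasure Mw {W \<in> space Mw. good k W}"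
  using q
proof (induction q)
  case 0
  have "(\<integral>\<^sup>+W. ennreal (if good k W then 1 else 0) * ennreal (\<Prod>r<0. exp ((X (Suc k) W r)\<^sup>2 / (4 * fst (cst k)))) \<partial>Mw)
      = (\<integral>\<^sup>+W. indicator {W \<in> space Mw. good k W} W \<partial>Mw)"
    by (intro nn_integral_cong) (simp add: indicator_def)
  also have "\<dots> = emeasure Mw {W \<in> space Mw. good k W}"
    by (rule nn_integral_indicator) measurable
  finally show ?case by simp
next
  case (Suc q)
  define S where "S = fst (cst k)"
  have S: "S > 0" using cst_pos[of k] by (simp add: S_def)
  define F where "F W = ennreal (if good k W then 1 else 0) * ennreal (\<Prod>r<q. exp ((X (Suc k) W r)\<^sup>2 / (4 * S)))" for W
  have eq: "ennreal (if good k W then 1 else 0) * ennreal (\<Prod>r<Suc q. exp ((X (Suc k) W r)\<^sup>2 / (4 * S)))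
      = F W * ennreal (exp ((X (Suc k) W q)\<^sup>2 / (4 * S)))" for W
    by (simp add: F_def ennreal_mult' prod_nonneg mult.assoc)
  have "(\<integral>\<^sup>+W. ennreal (if good k W then 1 else 0) * ennreal (\<Prod>r<Suc q. exp ((X (Suc k) W r)\<^sup>2 / (4 * fst (cst k)))) \<partial>Mw)
     = (\<integral>\<^sup>+W. F W * ennreal (exp ((X (Suc k) W q)\<^sup>2 / (4 * S))) \<partial>PiM (weight_idx L n m) (\<lambda>_. NN))"
    unfolding Mw_eq S_def[symmetric] by (rule nn_integral_cong) (rule eq)
  also have "(\<integral>\<^sup>+W. F W * ennreal (exp ((X (Suc k) W q)\<^sup>2 / (4 * S))) \<partial>PiM (weight_idx L n m) (\<lambda>_. NN))
      \<le> ennreal (sqrt 2) * (\<integral>\<^sup>+W. F W \<partial>PiM (weight_idx L n m) (\<lambda>_. NN))"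
  proof (rule row_step[where a = "coef (Suc k)"])
    show "finite (weight_idx L n m)" by (rule fin_I)
    show "rowset (Suc k) q \<subseteq> weight_idx L n m" using kL Suc.prems by (intro rowset_sub) auto
    show "S > 0" by (rule S)
    show "F \<in> borel_measurable (PiM (weight_idx L n m) (\<lambda>_. NN))"
      unfolding Mw_eq[symmetric] F_def by measurable
    show "(\<lambda>W. X (Suc k) W q) \<in> borel_measurable (PiM (weight_idx L n m) (\<lambda>_. NN))"
      unfolding Mw_eq[symmetric] by measurable
    fix \<omega> \<omega>' :: "nat \<times> nat \<times> nat \<times> nat \<Rightarrow> real"
    assume ag: "\<forall>i. i \<notin> rowset (Suc k) q \<longrightarrow> \<omega> i = \<omega>' i"
    have "good k \<omega> = good k \<omega>'" by (rule good_dep) (use ag in auto)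
    moreover have "X (Suc k) \<omega> r = X (Suc k) \<omega>' r" if "r < q" for r
      by (rule X_dep_row[where q = q]) (use ag that in auto)
    ultimately show "F \<omega> = F \<omega>'" by (simp add: F_def)
    show "coef (Suc k) \<omega> = coef (Suc k) \<omega>'" by (rule coef_dep) (use ag in auto)
  next
    fix \<omega> show "X (Suc k) \<omega> q = (\<Sum>j\<in>rowset (Suc k) q. coef (Suc k) \<omega> j * \<omega> j)" by (rule X_lin)
  next
    fix \<omega> assume "F \<omega> \<noteq> 0"
    then have "good k \<omega>" by (simp add: F_def split: if_splits)
    then show "(\<Sum>j\<in>rowset (Suc k) q. (coef (Suc k) \<omega> j)\<^sup>2) \<le> S"
      by (simp add: coef_sq good_def S_def)
  qed
  also have "ennreal (sqrt 2) * (\<integral>\<^sup>+W. F W \<partial>PiM (weight_idx L n m) (\<lambda>_. NN)) \<le> ennreal (sqrt 2) * (ennreal (sqrt 2) ^ q * emeasure Mw {W \<in> space Mw. good k W})"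
    using Suc by (intro mult_left_mono) (simp_all add: F_def S_def Mw_eq)
  finally show ?case
    by (simp add: mult.assoc mult_left_mono)
qed

lemma tail_int:
  assumes kL: "Suc k \<le> L" and i: "i < m"
  shows "(\<integral>\<^sup>+W. ennreal (if good k W then 1 else 0) * ennreal (exp ((X (Suc k) W i)\<^sup>2 / (4 * fst (cst k)))) \<partial>Mw)
     \<le> ennreal (sqrt 2)"
proof -
  interpret P: prob_space Mw by (rule prob_Mw)
  define S where "S = fst (cst k)"
  have S: "S > 0" using cst_pos[of k] by (simp add: S_def)
  define F where "F W = ennreal (if good k W then 1 else 0)" for W
  have "(\<integral>\<^sup>+W. F W * ennreal (exp ((X (Suc k) W i)\<^sup>2 / (4 * S))) \<partial>PiM (weight_idx L n m) (\<lambda>_. NN))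
      \<le> ennreal (sqrt 2) * (\<integral>\<^sup>+W. F W \<partial>PiM (weight_idx L n m) (\<lambda>_. NN))"
  proof (rule row_step[where a = "coef (Suc k)"])
    show "finite (weight_idx L n m)" by (rule fin_I)
    show "rowset (Suc k) i \<subseteq> weight_idx L n m" using kL i by (intro rowset_sub) auto
    show "S > 0" by (rule S)
    show "F \<in> borel_measurable (PiM (weight_idx L n m) (\<lambda>_. NN))"
      unfolding Mw_eq[symmetric] F_def by measurable
    show "(\<lambda>W. X (Suc k) W i) \<in> borel_measurable (PiM (weight_idx L n m) (\<lambda>_. NN))"
      unfolding Mw_eq[symmetric] by measurable
    fix \<omega> \<omega>' :: "nat \<times> nat \<times> nat \<times> nat \<Rightarrow> real"
    assume ag: "\<forall>j. j \<notin> rowset (Suc k) i \<longrightarrow> \<omega> j = \<omega>' j"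
    have "good k \<omega> = good k \<omega>'" by (rule good_dep) (use ag in auto)
    then show "F \<omega> = F \<omega>'" by (simp add: F_def)
    show "coef (Suc k) \<omega> = coef (Suc k) \<omega>'" by (rule coef_dep) (use ag in auto)
  next
    fix \<omega> show "X (Suc k) \<omega> i = (\<Sum>j\<in>rowset (Suc k) i. coef (Suc k) \<omega> j * \<omega> j)" by (rule X_lin)
  next
    fix \<omega> assume "F \<omega> \<noteq> 0"
    then have "good k \<omega>" by (simp add: F_def split: if_splits)
    then show "(\<Sum>j\<in>rowset (Suc k) i. (coef (Suc k) \<omega> j)\<^sup>2) \<le> S"
      by (simp add: coef_sq good_def S_def)
  qed
  also have "(\<integral>\<^sup>+W. F W \<partial>PiM (weight_idx L n m) (\<lambda>_. NN)) = emeasure Mw {W \<in> space Mw. good k W}"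
  proof -
    have "(\<integral>\<^sup>+W. F W \<partial>PiM (weight_idx L n m) (\<lambda>_. NN)) = (\<integral>\<^sup>+W. indicator {W \<in> space Mw. good k W} W \<partial>Mw)"
      unfolding Mw_eq by (intro nn_integral_cong) (simp add: indicator_def F_def Mw_eq)
    also have "\<dots> = emeasure Mw {W \<in> space Mw. good k W}"
      by (rule nn_integral_indicator) measurable
    finally show ?thesis .
  qed
  also have "ennreal (sqrt 2) * emeasure Mw {W \<in> space Mw. good k W} \<le> ennreal (sqrt 2) * 1"
    by (intro mult_left_mono) (simp_all add: P.emeasure_le_1)
  finally show ?thesis by (simp add: F_def S_def Mw_eq)
qed

lemma ennreal_meas_bound:
  assumes "ennreal a * ennreal c \<le> ennreal b" "c > 0" "a \<ge> 0" "b \<ge> 0"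
  shows "a \<le> b / c"
proof -
  have "ennreal (a * c) \<le> ennreal b" using assms by (simp add: ennreal_mult')
  then have "a * c \<le> b" using assms by (simp add: ennreal_le_iff)
  then show ?thesis using assms by (simp add: pos_le_divide_eq)
qed

lemma xs_bad:
  assumes kL: "Suc k \<le> L"
  shows "measure Mw {W \<in> space Mw. good k W \<and> Xs (Suc k) W > 4 * fst (cst k)} \<le> sqrt 2 ^ m / exp (real m)"
proof -
  interpret P: prob_space Mw by (rule prob_Mw)
  define S where "S = fst (cst k)"
  have S: "S > 0" using cst_pos[of k] by (simp add: S_def)
  define A where "A = {W \<in> space Mw. good k W \<and> Xs (Suc k) W > 4 * S}"
  have Am: "A \<in> sets Mw" unfolding A_def by measurable
  have "emeasure Mw A * ennreal (exp (real m))
     \<le> (\<integral>\<^sup>+W. ennreal (if good k W then 1 else 0) * ennreal (\<Prod>r<m. exp ((X (Suc k) W r)\<^sup>2 / (4 * S))) \<partial>Mw)"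
  proof (rule markov_nn[OF Am])
    fix W assume W: "W \<in> A"
    have sum_eq: "(\<Sum>r<m. (X (Suc k) W r)\<^sup>2 / (4 * S)) = real m * Xs (Suc k) W / (4 * S)"
      using m0 by (simp add: Xs_def sum_divide_distrib[symmetric])
    have "real m * (4 * S) / (4 * S) \<le> real m * Xs (Suc k) W / (4 * S)"
      using W S by (intro divide_right_mono mult_left_mono) (auto simp: A_def)
    then have "real m \<le> (\<Sum>r<m. (X (Suc k) W r)\<^sup>2 / (4 * S))" using S sum_eq by simp
    then have "exp (real m) \<le> (\<Prod>r<m. exp ((X (Suc k) W r)\<^sup>2 / (4 * S)))"
      by (simp add: exp_sum[symmetric])
    then show "ennreal (exp (real m)) \<le> ennreal (if good k W then 1 else 0) * ennreal (\<Prod>r<m. exp ((X (Suc k) W r)\<^sup>2 / (4 * S)))"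
      using W by (simp add: A_def ennreal_leI)
  qed
  also have "\<dots> \<le> ennreal (sqrt 2) ^ m * emeasure Mw {W \<in> space Mw. good k W}"
    using chi_bound[OF kL, of m] by (simp add: S_def)
  also have "\<dots> \<le> ennreal (sqrt 2) ^ m * 1"
    by (intro mult_left_mono) (simp_all add: P.emeasure_le_1)
  finally have "ennreal (measure Mw A) * ennreal (exp (real m)) \<le> ennreal (sqrt 2 ^ m)"
    by (simp add: P.emeasure_eq_measure ennreal_power)
  then have "measure Mw A \<le> sqrt 2 ^ m / exp (real m)"
    by (rule ennreal_meas_bound) auto
  then show ?thesis by (simp add: A_def S_def)
qed

lemma bad_bound:
  assumes "k \<le> L"
  shows "measure Mw {W \<in> space Mw. \<not> good k W} \<le> real k * (sqrt 2 ^ m / exp (real m))"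
  using assms
proof (induction k)
  case 0 then show ?case by (simp add: good0)
next
  case (Suc k)
  interpret P: prob_space Mw by (rule prob_Mw)
  have sub: "{W \<in> space Mw. \<not> good (Suc k) W} \<subseteq> {W \<in> space Mw. \<not> good k W} \<union> {W \<in> space Mw. good k W \<and> Xs (Suc k) W > 4 * fst (cst k)}"
    using good_step by force
  have "measure Mw {W \<in> space Mw. \<not> good (Suc k) W}
      \<le> measure Mw ({W \<in> space Mw. \<not> good k W} \<union> {W \<in> space Mw. good k W \<and> Xs (Suc k) W > 4 * fst (cst k)})"
    by (intro P.finite_measure_mono[OF sub]) measurable
  also have "\<dots> \<le> measure Mw {W \<in> space Mw. \<not> good k W} + measure Mw {W \<in> space Mw. good k W \<and> Xs (Suc k) W > 4 * fst (cst k)}"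
    by (intro measure_Un_le) measurable
  also have "\<dots> \<le> real k * (sqrt 2 ^ m / exp (real m)) + sqrt 2 ^ m / exp (real m)"
    using Suc xs_bad[of k] by (intro add_mono) auto
  finally show ?case by (simp add: field_simps)
qed

lemma tail_bad:
  assumes kL: "Suc k \<le> L" and i: "i < m" and t: "t \<ge> 0"
  shows "measure Mw {W \<in> space Mw. good k W \<and> \<bar>X (Suc k) W i\<bar> > t} \<le> sqrt 2 / exp (t\<^sup>2 / (4 * fst (cst k)))"
proof -
  interpret P: prob_space Mw by (rule prob_Mw)
  define S where "S = fst (cst k)"
  have S: "S > 0" using cst_pos[of k] by (simp add: S_def)
  define A where "A = {W \<in> space Mw. good k W \<and> \<bar>X (Suc k) W i\<bar> > t}"
  have Am: "A \<in> sets Mw" unfolding A_def by measurable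
  have "emeasure Mw A * ennreal (exp (t\<^sup>2 / (4 * S)))
     \<le> (\<integral>\<^sup>+W. ennreal (if good k W then 1 else 0) * ennreal (exp ((X (Suc k) W i)\<^sup>2 / (4 * S))) \<partial>Mw)"
  proof (rule markov_nn[OF Am])
    fix W assume W: "W \<in> A"
    then have "t < \<bar>X (Suc k) W i\<bar>" by (simp add: A_def)
    then have "t\<^sup>2 \<le> (X (Suc k) W i)\<^sup>2" using t
      by (metis abs_le_square_iff abs_of_nonneg less_imp_le)
    then have "t\<^sup>2 / (4 * S) \<le> (X (Suc k) W i)\<^sup>2 / (4 * S)" using S by (simp add: divide_right_mono)
    then show "ennreal (exp (t\<^sup>2 / (4 * S))) \<le> ennreal (if good k W then 1 else 0) * ennreal (exp ((X (Suc k) W i)\<^sup>2 / (4 * S)))"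
      using W by (simp add: A_def ennreal_leI)
  qed
  also have "\<dots> \<le> ennreal (sqrt 2)" using tail_int[OF kL i] by (simp add: S_def)
  finally have "ennreal (measure Mw A) * ennreal (exp (t\<^sup>2 / (4 * S))) \<le> ennreal (sqrt 2)"
    by (simp add: P.emeasure_eq_measure)
  then have "measure Mw A \<le> sqrt 2 / exp (t\<^sup>2 / (4 * S))"
    by (rule ennreal_meas_bound) auto
  then show ?thesis by (simp add: A_def S_def)
qed

lemma X_tail:
  assumes kL: "Suc k \<le> L" and i: "i < m" and t: "t \<ge> 0"
  shows "measure Mw {W \<in> space Mw. \<bar>X (Suc k) W i\<bar> > t}
     \<le> real k * (sqrt 2 ^ m / exp (real m)) + sqrt 2 / exp (t\<^sup>2 / (4 * fst (cst k)))"
proof -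
  interpret P: prob_space Mw by (rule prob_Mw)
  have sub: "{W \<in> space Mw. \<bar>X (Suc k) W i\<bar> > t} \<subseteq> {W \<in> space Mw. \<not> good k W} \<union> {W \<in> space Mw. good k W \<and> \<bar>X (Suc k) W i\<bar> > t}"
    by auto
  have "measure Mw {W \<in> space Mw. \<bar>X (Suc k) W i\<bar> > t}
      \<le> measure Mw ({W \<in> space Mw. \<not> good k W} \<union> {W \<in> space Mw. good k W \<and> \<bar>X (Suc k) W i\<bar> > t})"
    by (intro P.finite_measure_mono[OF sub]) measurable
  also have "\<dots> \<le> measure Mw {W \<in> space Mw. \<not> good k W} + measure Mw {W \<in> space Mw. good k W \<and> \<bar>X (Suc k) W i\<bar> > t}"
    by (intro measure_Un_le) measurable
  also have "\<dots> \<le> real k * (sqrt 2 ^ m / exp (real m)) + sqrt 2 / exp (t\<^sup>2 / (4 * fst (cst k)))"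
    using bad_bound[of k] tail_bad[OF kL i t] kL by (intro add_mono) auto
  finally show ?thesis .
qed

end


theorem lemma9:
  fixes lam Lsig Cy Cz Cu :: real and n L l :: nat
  assumes "lam > 0"
    and "Lsig-lipschitz_on UNIV (act lam)"
    and "1 \<le> l" and "l \<le> L"
  shows "\<exists>cz > 0. \<exists>cu > 0. \<forall>m y z0 u0 i.
     (\<forall>k<n. \<bar>y k\<bar> \<le> Cy) \<longrightarrow> (\<forall>k<m. \<bar>z0 k\<bar> \<le> Cz) \<longrightarrow> (\<forall>k<m. \<bar>u0 k\<bar> \<le> Cu) \<longrightarrow> i < m \<longrightarrow>
     measure (weight_space L n m)
       {W \<in> space (weight_space L n m).
          \<bar>zl lam n m y z0 u0 W l i\<bar> \<le> ln (real m) + Lsig * \<bar>ul lam n m y z0 u0 W (l - 1) i\<bar> + \<bar>act lam 0\<bar>}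
       \<ge> 1 - 2 * exp (- cz * (ln (real m))\<^sup>2)
   \<and> measure (weight_space L n m)
       {W \<in> space (weight_space L n m).
          \<bar>ul lam n m y z0 u0 W l i\<bar> \<le> ln (real m) + \<bar>ul lam n m y z0 u0 W (l - 1) i\<bar> + \<bar>zl lam n m y z0 u0 W l i\<bar>}
       \<ge> 1 - 2 * exp (- cu * (ln (real m))\<^sup>2)"
proof -
  have L1: "Lsig \<ge> 1" by (rule Lsig_ge1[OF assms(1,2)])
  obtain k where lk: "l = Suc k" using assms(3) by (cases l) auto
  have kL: "Suc k \<le> L" using assms(4) lk by simp
  define S where "S = fst (cstg Cy Cz Cu k)"
  have "fst (cstg Cy Cz Cu k) \<ge> 1 \<and> snd (cstg Cy Cz Cu k) \<ge> 0" by (induction k) auto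
  then have S1: "S \<ge> 1" unfolding S_def by simp
  define c where "c = min (1/(8*S)) (1/(32*(1+real k)))"
  have c0: "c > 0" using S1 by (simp add: c_def)
  have key: "measure (weight_space L n m)
       {W \<in> space (weight_space L n m).
          \<bar>zl lam n m y z0 u0 W l i\<bar> \<le> ln (real m) + Lsig * \<bar>ul lam n m y z0 u0 W (l - 1) i\<bar> + \<bar>act lam 0\<bar>}
       \<ge> 1 - 2 * exp (- c * (ln (real m))\<^sup>2)
   \<and> measure (weight_space L n m)
       {W \<in> space (weight_space L n m).
          \<bar>ul lam n m y z0 u0 W l i\<bar> \<le> ln (real m) + \<bar>ul lam n m y z0 u0 W (l - 1) i\<bar> + \<bar>zl lam n m y z0 u0 W l i\<bar>}
       \<ge> 1 - 2 * exp (- c * (ln (real m))\<^sup>2)"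
    if yb: "\<forall>k<n. \<bar>y k\<bar> \<le> Cy" and zb: "\<forall>k<m. \<bar>z0 k\<bar> \<le> Cz" and ub: "\<forall>k<m. \<bar>u0 k\<bar> \<le> Cu" and im: "i < m"
    for m y z0 u0 i
  proof -
    interpret N: net2 lam n m y z0 u0 L Cy Cz Cu
      using assms(1) yb zb ub im by unfold_locales auto
    interpret P: prob_space "weight_space L n m" by (rule N.prob_Mw)
    define t where "t = ln (real m)"
    have t0: "t \<ge> 0" using im by (simp add: t_def)
    define B where "B = measure (weight_space L n m) {W \<in> space (weight_space L n m). \<bar>N.X (Suc k) W i\<bar> > t}"
    have Bb: "B \<le> 2 * exp (- c * t\<^sup>2)"
    proof (rule final_arith[where m = m and k = k and S = S])
      show "1 \<le> m" using im by simp
      show "1 \<le> S" by (rule S1)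
      show "c = min (1/(8*S)) (1/(32*(1+real k)))" by (rule c_def)
      show "t = ln (real m)" by (rule t_def)
      show "B \<le> real k * (sqrt 2 ^ m / exp (real m)) + sqrt 2 / exp (t\<^sup>2/(4*S))"
        unfolding B_def S_def by (rule N.X_tail[OF kL im t0])
      show "B \<le> 1" unfolding B_def by (rule P.prob_le_1)
    qed
    define G where "G = {W \<in> space (weight_space L n m). \<bar>N.X (Suc k) W i\<bar> \<le> t}"
    have Gm: "G = space (weight_space L n m) - {W \<in> space (weight_space L n m). \<bar>N.X (Suc k) W i\<bar> > t}"
      by (auto simp: G_def)
    have PG: "measure (weight_space L n m) G \<ge> 1 - 2 * exp (- c * t\<^sup>2)"
    proof -
      have "measure (weight_space L n m) G = 1 - B"
        unfolding Gm B_def by (rule P.prob_compl) measurable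
      then show ?thesis using Bb by simp
    qed
    have zl_eq: "zl lam n m y z0 u0 W j = N.Z j W" and ul_eq: "ul lam n m y z0 u0 W j = N.U j W" for W j
      by (simp_all add: zl_def ul_def N.Z_def N.U_def)
    have pw: "\<bar>N.Z (Suc k) W i\<bar> \<le> t + Lsig * \<bar>N.U k W i\<bar> \<and>
              \<bar>N.U (Suc k) W i\<bar> \<le> t + \<bar>N.U k W i\<bar> + \<bar>N.Z (Suc k) W i\<bar>" if "W \<in> G" for W
    proof -
      have x: "\<bar>N.X (Suc k) W i\<bar> \<le> t" using that by (simp add: G_def)
      have z: "N.Z (Suc k) W i = act lam (N.X (Suc k) W i + N.U k W i)" by (simp add: N.ZU_Suc)
      have u: "N.U (Suc k) W i = N.U k W i + N.X (Suc k) W i - N.Z (Suc k) W i" by (simp add: N.ZU_Suc)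
      have "\<bar>act lam (N.X (Suc k) W i + N.U k W i)\<bar> \<le> \<bar>N.X (Suc k) W i + N.U k W i\<bar>"
        by (rule act_abs[OF assms(1)])
      moreover have "\<bar>N.U k W i\<bar> \<le> Lsig * \<bar>N.U k W i\<bar>" using L1 by (simp add: mult_le_cancel_right1)
      ultimately show ?thesis using x z u by (smt (verit))
    qed
    have S1m: "{W \<in> space (weight_space L n m).
          \<bar>zl lam n m y z0 u0 W l i\<bar> \<le> ln (real m) + Lsig * \<bar>ul lam n m y z0 u0 W (l - 1) i\<bar> + \<bar>act lam 0\<bar>}
          \<in> sets (weight_space L n m)"
      unfolding zl_eq ul_eq by measurable
    have S2m: "{W \<in> space (weight_space L n m).
          \<bar>ul lam n m y z0 u0 W l i\<bar> \<le> ln (real m) + \<bar>ul lam n m y z0 u0 W (l - 1) i\<bar> + \<bar>zl lam n m y z0 u0 W l i\<bar>}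
          \<in> sets (weight_space L n m)"
      unfolding zl_eq ul_eq by measurable
    have sub1: "G \<subseteq> {W \<in> space (weight_space L n m).
          \<bar>zl lam n m y z0 u0 W l i\<bar> \<le> ln (real m) + Lsig * \<bar>ul lam n m y z0 u0 W (l - 1) i\<bar> + \<bar>act lam 0\<bar>}"
      using pw by (auto simp: zl_eq ul_eq lk act_zero t_def G_def)
    have sub2: "G \<subseteq> {W \<in> space (weight_space L n m).
          \<bar>ul lam n m y z0 u0 W l i\<bar> \<le> ln (real m) + \<bar>ul lam n m y z0 u0 W (l - 1) i\<bar> + \<bar>zl lam n m y z0 u0 W l i\<bar>}"
      using pw by (auto simp: zl_eq ul_eq lk t_def G_def)
    show ?thesis
      using P.finite_measure_mono[OF sub1 S1m] P.finite_measure_mono[OF sub2 S2m] PG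
      by (simp add: t_def)
  qed
  show ?thesis using c0 key by blast
qed

end
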